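(* Let $n \in \mathbb{Z}^+$ and consider, in the ring $\mathbb{Z}$, the Frobenius template $(\mathbb{N}, (n + \mathbb{N}) \cup \{0\}, \mathbb{N})$. If $a_1, \dots, a_k \in \mathbb{N}$ are coprime, then \[ (a_1 + \dots + a_k)n + \chi(a_1, \dots, a_k) + \mathbb{N} \subseteq \mathrm{Frob}(a_1, \dots, a_k), \] where $\mathrm{Frob}$ is taken with respect to this template.
   Context: $\mathbb{N}$ denotes the nonnegative integers and $\mathbb{Z}^+ = \mathbb{N}\setminus\{0\}$; for $S \subseteq \mathbb{Z}$ and $g \in \mathbb{Z}$, $g + S = \{g + s : s \in S\}$. Integers $a_1,\dots,a_k \in \mathbb{N}$ are coprime if $\gcd(a_1,\dots,a_k)=1$. For coprime $a_1, \dots, a_k \in \mathbb{N}$, $\chi(a_1, \dots, a_k)$ denotes the least $w \in \mathbb{N}$ such that $w + \mathbb{N} \subseteq \{\sum_{i=1}^k \lambda_i a_i : \lambda_i \in \mathbb{N}\}$ (the classical Frobenius number plus one). For the template $(\mathbb{N}, (n + \mathbb{N}) \cup \{0\}, \mathbb{N})$: $MN(a_1, \dots, a_k) = \{\sum_{i=1}^k \lambda_i a_i : \lambda_1, \dots, \lambda_k \in (n + \mathbb{N}) \cup \{0\}\}$ and $\mathrm{Frob}(a_1, \dots, a_k) = \{w \in \mathbb{Z} : w + \mathbb{N} \subseteq MN(a_1, \dots, a_k)\}$. *)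

theory Defs
  imports Main
begin

text \<open>Tuples a_1..a_k are represented as a function a :: nat => nat restricted to indices i < k.\<close>

definition combs :: "nat set \<Rightarrow> (nat \<Rightarrow> nat) \<Rightarrow> nat \<Rightarrow> int set" where
  "combs L a k = {(\<Sum>i<k. int (lam i) * int (a i)) | lam. \<forall>i<k. lam i \<in> L}"

text \<open>chi(a_1..a_k): least w in N with w + N contained in the numerical semigroup (Frobenius number plus one).\<close>
definition chi :: "(nat \<Rightarrow> nat) \<Rightarrow> nat \<Rightarrow> nat" where
  "chi a k = (LEAST w::nat. \<forall>m::nat. int (w + m) \<in> combs UNIV a k)"

definition MN :: "nat \<Rightarrow> (nat \<Rightarrow> nat) \<Rightarrow> nat \<Rightarrow> int set" where
  "MN n a k = combs ({n..} \<union> {0}) a k"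

definition Frob :: "nat \<Rightarrow> (nat \<Rightarrow> nat) \<Rightarrow> nat \<Rightarrow> int set" where
  "Frob n a k = {w::int. \<forall>m::nat. w + int m \<in> MN n a k}"

end

theory Submission
  imports Defs
begin

lemma bez: "\<exists>c::nat\<Rightarrow>int. (\<Sum>i<k. c i * int (a i)) = int (Gcd (a ` {..<k}))"
proof (induction k)
  case 0
  then show ?case by simp
next
  case (Suc k)
  then obtain c where c: "(\<Sum>i<k. c i * int (a i)) = int (Gcd (a ` {..<k}))" by blast
  obtain u v where uv: "u * int (a k) + v * int (Gcd (a ` {..<k})) = gcd (int (a k)) (int (Gcd (a ` {..<k})))"
    using bezout_int by blast
  define c' where "c' = (\<lambda>i. if i = k then u else v * c i)"
  have "(\<Sum>i<Suc k. c' i * int (a i)) = u * int (a k) + (\<Sum>i<k. v * c i * int (a i))"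
    by (simp add: c'_def)
  also have "(\<Sum>i<k. v * c i * int (a i)) = v * (\<Sum>i<k. c i * int (a i))"
    by (simp add: sum_distrib_left mult.assoc)
  also have "u * int (a k) + v * (\<Sum>i<k. c i * int (a i)) = int (Gcd (a ` {..<Suc k}))"
    using uv c by (simp add: lessThan_Suc Gcd_insert gcd_int_int_eq)
  finally show ?case by blast
qed

lemma frob_exists:
  assumes "Gcd (a ` {..<k}) = 1"
  shows "\<exists>w::nat. \<forall>m::nat. int (w + m) \<in> combs UNIV a k"
proof -
  obtain c where c: "(\<Sum>i<k. c i * int (a i)) = 1" using bez[of a k] assms by auto
  define s where "s = (\<Sum>i<k. a i)"
  have spos: "s > 0"
  proof (rule ccontr)
    assume "\<not> s > 0"
    then have "\<forall>i<k. a i = 0" by (simp add: s_def)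
    then have "(\<Sum>i<k. c i * int (a i)) = 0" by simp
    with c show False by simp
  qed
  define C where "C = (\<Sum>i<k. nat \<bar>c i\<bar>)"
  have cC: "\<And>i. i < k \<Longrightarrow> \<bar>c i\<bar> \<le> int C"
  proof -
    fix i assume "i < k"
    then have "nat \<bar>c i\<bar> \<le> C" unfolding C_def
      by (intro member_le_sum) auto
    then show "\<bar>c i\<bar> \<le> int C" by linarith
  qed
  show ?thesis
  proof (intro exI allI)
    fix m :: nat
    define N where "N = s * s * C + m"
    define q where "q = N div s"
    define r where "r = N mod s"
    have Nqr: "N = q * s + r" by (simp add: q_def r_def)
    have rs: "r < s" using spos by (simp add: r_def)
    have qge: "q \<ge> s * C" unfolding q_def N_def using spos
      by (metis div_le_mono div_mult_self1_is_m mult.assoc mult.commute le_add1)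
    define lam where "lam = (\<lambda>i. nat (int q + int r * c i))"
    have nonneg: "\<And>i. i < k \<Longrightarrow> int q + int r * c i \<ge> 0"
    proof -
      fix i assume "i < k"
      have "\<bar>int r * c i\<bar> \<le> int s * int C"
        using cC[OF \<open>i<k\<close>] rs by (simp add: abs_mult mult_mono)
      moreover have "int s * int C \<le> int q" using qge by (metis of_nat_le_iff of_nat_mult)
      ultimately show "int q + int r * c i \<ge> 0" by linarith
    qed
    have "(\<Sum>i<k. int (lam i) * int (a i)) = (\<Sum>i<k. (int q + int r * c i) * int (a i))"
      using nonneg by (intro sum.cong) (auto simp: lam_def)
    also have "\<dots> = int q * (\<Sum>i<k. int (a i)) + int r * (\<Sum>i<k. c i * int (a i))"
      by (simp add: algebra_simps sum.distrib sum_distrib_left)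
    also have "\<dots> = int N" using c Nqr by (simp add: s_def)
    finally have "int N = (\<Sum>i<k. int (lam i) * int (a i)) \<and> (\<forall>i<k. lam i \<in> UNIV)" by simp
    then have "int N \<in> combs UNIV a k" unfolding combs_def by blast
    then show "int (s * s * C + m) \<in> combs UNIV a k" by (simp add: N_def)
  qed
qed

theorem proposition3p1:
  fixes n k :: nat and a :: "nat \<Rightarrow> nat"
  assumes "n > 0"
    and "Gcd (a ` {..<k}) = 1"
  shows "{int ((\<Sum>i<k. a i) * n + chi a k + m) | m::nat. True} \<subseteq> Frob n a k"
proof
  fix x assume "x \<in> {int ((\<Sum>i<k. a i) * n + chi a k + m) | m::nat. True}"
  then obtain m where x: "x = int ((\<Sum>i<k. a i) * n + chi a k + m)" by blast
  have chi: "\<forall>m::nat. int (chi a k + m) \<in> combs UNIV a k"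
    unfolding chi_def using frob_exists[OF assms(2)] by (rule LeastI_ex)
  show "x \<in> Frob n a k" unfolding Frob_def
  proof (intro CollectI allI)
    fix m' :: nat
    from chi obtain mu where mu: "int (chi a k + (m + m')) = (\<Sum>i<k. int (mu i) * int (a i))"
      unfolding combs_def by blast
    define lam where "lam = (\<lambda>i. mu i + n)"
    have "x + int m' = (\<Sum>i<k. int (a i)) * int n + int (chi a k + (m + m'))"
      by (simp add: x)
    also have "\<dots> = (\<Sum>i<k. int (a i)) * int n + (\<Sum>i<k. int (mu i) * int (a i))"
      by (simp only: mu)
    also have "\<dots> = (\<Sum>i<k. int (lam i) * int (a i))"
      by (simp add: lam_def algebra_simps sum.distrib sum_distrib_left sum_distrib_right)
    finally have "x + int m' = (\<Sum>i<k. int (lam i) * int (a i))" .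
    moreover have "\<forall>i<k. lam i \<in> {n..} \<union> {0}" by (simp add: lam_def)
    ultimately show "x + int m' \<in> MN n a k" unfolding MN_def combs_def by blast
  qed
qed

end
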